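(* Let $d \ge 2$ and $\lambda > 0$. Consider the TransE model, in which each entity $e$ is assigned a vector $\vec{e} \in \mathbb{R}^d$ and each relation $r$ a vector $\vec{r} \in \mathbb{R}^d$, and declare a fact $(e_1, r, e_2)$ valid, i.e. $(e_1,r,e_2) \in P$, if and only if $\|\vec{e_1} + \vec{r} - \vec{e_2}\| \le \lambda$ (Euclidean norm). Then none of the following three implications holds for all TransE embeddings: (R1) if $r$ is reflexive on a set $\Delta$ of entities, then $r$ is symmetric on $\Delta$; (R2) if $r$ is reflexive on a set $\Delta$ of entities, then $r$ is transitive on $\Delta$; (R3) if an entity $e_1$ has relation $r$ with every entity in a set $\Delta$ of entities and an entity $e_2$ has relation $r$ with one of the entities in $\Delta$, then $e_2$ has relation $r$ with every entity in $\Delta$. That is, for each of (R1), (R2), (R3) there exist entity vectors and a relation vector in $\mathbb{R}^d$ such that, with $P$ defined by the threshold $\lambda$, the hypothesis of the implication is satisfied but its conclusion fails.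
   Context: A relation $r$ is reflexive on a set $E$ of entities if $(e,r,e) \in P$ for all $e \in E$; symmetric on $E$ if $(e_1,r,e_2)\in P \iff (e_2,r,e_1)\in P$ for all $e_1,e_2 \in E$; transitive on $E$ if $(e_1,r,e_2)\in P$ and $(e_2,r,e_3)\in P$ imply $(e_1,r,e_3)\in P$ for all $e_1,e_2,e_3 \in E$. The TransE implausibility score of a fact $(s,r,o)$ is $\|\vec{s}+\vec{r}-\vec{o}\|$. *)

theory Defs
  imports "HOL-Analysis.Analysis"
begin

definition transE_holds :: "real \<Rightarrow> ('e \<Rightarrow> real^'n) \<Rightarrow> real^'n \<Rightarrow> 'e \<Rightarrow> 'e \<Rightarrow> bool" where
  "transE_holds lam emb rv e1 e2 \<longleftrightarrow> norm (emb e1 + rv - emb e2) \<le> lam"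

definition reflexive_on :: "'e set \<Rightarrow> ('e \<Rightarrow> 'e \<Rightarrow> bool) \<Rightarrow> bool" where
  "reflexive_on E P \<longleftrightarrow> (\<forall>e\<in>E. P e e)"

definition symmetric_on :: "'e set \<Rightarrow> ('e \<Rightarrow> 'e \<Rightarrow> bool) \<Rightarrow> bool" where
  "symmetric_on E P \<longleftrightarrow> (\<forall>e1\<in>E. \<forall>e2\<in>E. P e1 e2 \<longleftrightarrow> P e2 e1)"

definition transitive_on :: "'e set \<Rightarrow> ('e \<Rightarrow> 'e \<Rightarrow> bool) \<Rightarrow> bool" where
  "transitive_on E P \<longleftrightarrow> (\<forall>e1\<in>E. \<forall>e2\<in>E. \<forall>e3\<in>E. P e1 e2 \<longrightarrow> P e2 e3 \<longrightarrow> P e1 e3)"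

end

theory Submission
  imports Defs
begin

lemma th_line:
  fixes u :: "real^'n"
  assumes "norm u = 1"
  shows "transE_holds lam (\<lambda>n. f n *\<^sub>R u) (c *\<^sub>R u) a b \<longleftrightarrow> \<bar>f a + c - f b\<bar> \<le> lam"
proof -
  have "f a *\<^sub>R u + c *\<^sub>R u - f b *\<^sub>R u = (f a + c - f b) *\<^sub>R u"
    by (simp add: algebra_simps)
  then show ?thesis using assms by (simp add: transE_holds_def)
qed

theorem lemma1:
  fixes lam :: real
  assumes "CARD('n::finite) \<ge> 2" and "lam > 0"
  shows "(\<exists>(emb :: nat \<Rightarrow> real^'n) (rv :: real^'n) (D :: nat set).
            reflexive_on D (transE_holds lam emb rv) \<and>
            \<not> symmetric_on D (transE_holds lam emb rv))
       \<and> (\<exists>(emb :: nat \<Rightarrow> real^'n) (rv :: real^'n) (D :: nat set).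
            reflexive_on D (transE_holds lam emb rv) \<and>
            \<not> transitive_on D (transE_holds lam emb rv))
       \<and> (\<exists>(emb :: nat \<Rightarrow> real^'n) (rv :: real^'n) (D :: nat set) (e1 :: nat) (e2 :: nat).
            (\<forall>e\<in>D. transE_holds lam emb rv e1 e) \<and>
            (\<exists>e\<in>D. transE_holds lam emb rv e2 e) \<and>
            \<not> (\<forall>e\<in>D. transE_holds lam emb rv e2 e))"
proof -
  obtain i :: 'n where True by simp
  define u :: "real^'n" where "u = axis i 1"
  have u: "norm u = 1" unfolding u_def by simp
  note L = th_line[OF u]
  have A: "\<exists>(emb :: nat \<Rightarrow> real^'n) (rv :: real^'n) (D :: nat set).
            reflexive_on D (transE_holds lam emb rv) \<and>
            \<not> symmetric_on D (transE_holds lam emb rv)"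
  proof (intro exI conjI)
    let ?f = "\<lambda>n::nat. if n = 0 then 0 else lam"
    show "reflexive_on {0,1} (transE_holds lam (\<lambda>n. ?f n *\<^sub>R u) (lam *\<^sub>R u))"
      unfolding reflexive_on_def L using assms(2) by auto
    show "\<not> symmetric_on {0,1} (transE_holds lam (\<lambda>n. ?f n *\<^sub>R u) (lam *\<^sub>R u))"
      unfolding symmetric_on_def L using assms(2) by auto
  qed
  have B: "\<exists>(emb :: nat \<Rightarrow> real^'n) (rv :: real^'n) (D :: nat set).
            reflexive_on D (transE_holds lam emb rv) \<and>
            \<not> transitive_on D (transE_holds lam emb rv)"
  proof (intro exI conjI)
    let ?f = "\<lambda>n::nat. real n * lam"
    show "reflexive_on {0,1,2} (transE_holds lam (\<lambda>n. ?f n *\<^sub>R u) (0 *\<^sub>R u))"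
      unfolding reflexive_on_def L using assms(2) by auto
    have "\<not> transE_holds lam (\<lambda>n. ?f n *\<^sub>R u) (0 *\<^sub>R u) 0 2"
      unfolding L using assms(2) by auto
    moreover have "transE_holds lam (\<lambda>n. ?f n *\<^sub>R u) (0 *\<^sub>R u) 0 1"
      "transE_holds lam (\<lambda>n. ?f n *\<^sub>R u) (0 *\<^sub>R u) 1 2"
      unfolding L using assms(2) by auto
    ultimately show "\<not> transitive_on {0,1,2} (transE_holds lam (\<lambda>n. ?f n *\<^sub>R u) (0 *\<^sub>R u))"
      unfolding transitive_on_def by blast
  qed
  have C: "\<exists>(emb :: nat \<Rightarrow> real^'n) (rv :: real^'n) (D :: nat set) (e1 :: nat) (e2 :: nat).
            (\<forall>e\<in>D. transE_holds lam emb rv e1 e) \<and>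
            (\<exists>e\<in>D. transE_holds lam emb rv e2 e) \<and>
            \<not> (\<forall>e\<in>D. transE_holds lam emb rv e2 e)"
  proof (intro exI conjI)
    let ?f = "\<lambda>n::nat. if n = 0 then 0 else if n = 1 then lam else if n = 2 then lam / 2 else - lam"
    show "\<forall>e\<in>{0,1}. transE_holds lam (\<lambda>n. ?f n *\<^sub>R u) (0 *\<^sub>R u) 2 e"
      unfolding L using assms(2) by auto
    show "\<exists>e\<in>{0,1}. transE_holds lam (\<lambda>n. ?f n *\<^sub>R u) (0 *\<^sub>R u) 3 e"
      unfolding L using assms(2) by auto
    show "\<not> (\<forall>e\<in>{0,1}. transE_holds lam (\<lambda>n. ?f n *\<^sub>R u) (0 *\<^sub>R u) 3 e)"
      unfolding L using assms(2) by auto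
  qed
  show ?thesis using A B C by blast
qed

end
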